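(* In the setting described in the context, for every $v=(v_1,v_2)\in V$, $$\langle\tilde\lambda^h,v\rangle_{-1,1}=\langle\tilde\lambda^h_1,v_1\rangle_{-1,1},$$ and $\langle\tilde\lambda^h_1,v_1\rangle_{-1,1}\ge0$ whenever $v_1\ge0$.
   Context: Let $\Omega\subset\mathbb{R}^2$ be a bounded polygonal Lipschitz domain with boundary partitioned into relatively open, pairwise disjoint parts $\Gamma_D,\Gamma_N,\Gamma_C$, $\mathrm{meas}(\Gamma_D)>0$, $\overline{\Gamma_C}\subset\partial\Omega\setminus\overline{\Gamma_D}$, outward unit normal on $\Gamma_C$ equal to $e_1=(1,0)$. Let $\sigma(v)=\chi\,\mathrm{tr}(\epsilon(v))I+2\mu\epsilon(v)$ ($\chi,\mu>0$, $\epsilon(v)=\frac12(\nabla v+\nabla v^T)$), $a(w,v)=\int_\Omega\sigma(w):\epsilon(v)\,dx$, $L(v)=\int_\Omega f\cdot v\,dx+\int_{\Gamma_N}g\cdot v\,ds$ with $f\in[L^2(\Omega)]^2$, $g\in[L^2(\Gamma_N)]^2$, and $V=\{v\in[H^1(\Omega)]^2: v=0\text{ on }\Gamma_D\}$. Let $\mathcal{T}_h$ be a regular triangulation of $\Omega$ (each of $\Gamma_D,\Gamma_N,\Gamma_C$ a union of mesh edges). $\mathcal{V}_h$, $\mathcal{M}_h$ are the sets of vertices and edge midpoints; $\mathcal{V}_h^C$ = vertices in $\overline{\Gamma_C}$, $\mathcal{M}_h^C$ = midpoints of edges on $\Gamma_C$; $\mathcal{V}_h^D,\mathcal{M}_h^D$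 analogously for $\Gamma_D$; $\mathcal{V}_h^o=\mathcal{V}_h\setminus\mathcal{V}_h^D$, $\mathcal{M}_h^o=\mathcal{M}_h\setminus\mathcal{M}_h^D$. $V^h=\{v\in[C(\overline\Omega)]^2: v|_T\in[P_2(T)]^2,\ v=0\text{ on }\Gamma_D\}$ with scalar quadratic Lagrange basis $\psi_z$, $z\in\mathcal{V}_h^o\cup\mathcal{M}_h^o$. $\mathcal{K}^h=\{v^h\in V^h: v^h_1(z)\le0\ \forall z\in\mathcal{V}_h^C\cup\mathcal{M}_h^C\}$; $u^h\in\mathcal{K}^h$ solves $a(u^h,v^h-u^h)\ge L(v^h-u^h)$ for all $v^h\in\mathcal{K}^h$. Split each edge of $\Gamma_C$ at its midpoint; $Q^h$ = continuous $\mathbb{R}^2$-valued functions on $\overline{\Gamma_C}$ affine on each half-edge, with scalar nodal basis $\phi_z$, $z\in\mathcal{V}_h^C\cup\mathcal{M}_h^C$. For a node $z$, $\omega_z$ = union of elements sharing $z$, $\gamma_{z,C}=\partial\omega_z\cap\Gamma_C$. $\pi_h v=\sum_{z\in\mathcal{V}_h^C\cup\mathcal{M}_h^C}\sum_{i=1}^2v_i(z)\psi_ze_i$ for $v\in Q^h$; $\langle w,v\rangle_h=\sum_{z}w(z)\cdot v(z)\int_{\gamma_{z,C}}\phi_z\,ds$; $\lambda^h=(\lambda^h_1,\lambda^h_2)\in Q^h$ is defined by $\langle\lambda^h,v^h\rangle_h=L(\pi_hv^h)-a(u^h,\pi_hv^h)$ for all $v^h\in Q^h$. Set $s^i_p=\lambda^h_i(p)$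 for $p\in\mathcal{V}_h^C\cup\mathcal{M}_h^C$, $i=1,2$, and define the quasi discrete contact force density $\tilde\lambda^h\in V^*$ by $\langle\tilde\lambda^h,v\rangle_{-1,1}=\sum_{i=1}^2\langle\tilde\lambda^h_i,v_i\rangle_{-1,1}$ with $\langle\tilde\lambda^h_i,w\rangle_{-1,1}=\int_{\Gamma_C}\big(\sum_{z\in\mathcal{V}_h^C\cup\mathcal{M}_h^C}s^i_z\phi_z\big)w\,ds$. *)

theory Defs
  imports "HOL-Analysis.Analysis"
begin

type_synonym pt = "real \<times> real"

definition e :: "nat \<Rightarrow> pt" where
  "e i = (if i = 1 then (1, 0) else (0, 1))"

definition comp :: "nat \<Rightarrow> pt \<Rightarrow> real" where
  "comp i v = (if i = 1 then fst v else snd v)"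

definition lipschitz_domain :: "pt set \<Rightarrow> bool" where
  "lipschitz_domain \<Omega> \<longleftrightarrow> open \<Omega> \<and> bounded \<Omega> \<and> connected \<Omega> \<and>
     (\<forall>x\<in>frontier \<Omega>. \<exists>r>0. \<exists>Q C (g::real \<Rightarrow> real).
        orthogonal_transformation Q \<and> lipschitz_on C UNIV g \<and>
        \<Omega> \<inter> ball x r = {y \<in> ball x r. snd (Q (y - x)) < g (fst (Q (y - x)))})"

(* A mesh is a finite set of vertex triples K; the element is convex hull K. *)
definition triangulation :: "pt set set \<Rightarrow> bool" where
  "triangulation Tr \<longleftrightarrow> finite Tr \<and> (\<forall>K\<in>Tr. card K = 3 \<and> \<not> collinear K) \<and>
     (\<forall>K\<in>Tr. \<forall>K'\<in>Tr. K \<noteq> K' \<longrightarrow> convex hull K \<inter> convex hull K' = convex hull (K \<inter> K'))"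

definition edge_pairs :: "pt set set \<Rightarrow> (pt \<times> pt) set" where
  "edge_pairs Tr = {(a, b). \<exists>K\<in>Tr. a \<in> K \<and> b \<in> K \<and> a \<noteq> b}"

definition edges_on :: "pt set set \<Rightarrow> pt set \<Rightarrow> (pt \<times> pt) set" where
  "edges_on Tr \<Gamma> = {(a, b) \<in> edge_pairs Tr. closed_segment a b \<subseteq> closure \<Gamma>}"

definition union_of_edges :: "pt set set \<Rightarrow> pt set \<Rightarrow> bool" where
  "union_of_edges Tr \<Gamma> \<longleftrightarrow> closure \<Gamma> = (\<Union>(a, b)\<in>edges_on Tr \<Gamma>. closed_segment a b)"

definition seg_integral :: "pt \<Rightarrow> pt \<Rightarrow> (pt \<Rightarrow> real) \<Rightarrow> real" where
  "seg_integral a b F = norm (b - a) * integral {0..1} (\<lambda>t. F (a + t *\<^sub>R (b - a)))"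

(* arc-length integral  \<integral>_S F ds  over a set S contained in the polygonal boundary part
   closure \<Gamma> (a union of mesh edges); each edge is counted in both orientations, hence 1/2 *)
definition bint :: "pt set set \<Rightarrow> pt set \<Rightarrow> pt set \<Rightarrow> (pt \<Rightarrow> real) \<Rightarrow> real" where
  "bint Tr \<Gamma> S F = (1/2) * (\<Sum>(a, b)\<in>edges_on Tr \<Gamma>. seg_integral a b (\<lambda>x. indicator S x * F x))"

definition verts :: "pt set set \<Rightarrow> pt set" where
  "verts Tr = \<Union>Tr"

definition mids :: "pt set set \<Rightarrow> pt set" where
  "mids Tr = {midpoint a b | a b. (a, b) \<in> edge_pairs Tr}"

definition verts_on :: "pt set set \<Rightarrow> pt set \<Rightarrow> pt set" where
  "verts_on Tr \<Gamma> = {z \<in> verts Tr. z \<in> closure \<Gamma>}"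

definition mids_on :: "pt set set \<Rightarrow> pt set \<Rightarrow> pt set" where
  "mids_on Tr \<Gamma> = {midpoint a b | a b. (a, b) \<in> edges_on Tr \<Gamma>}"

definition contact_nodes :: "pt set set \<Rightarrow> pt set \<Rightarrow> pt set" where
  "contact_nodes Tr \<Gamma>C = verts_on Tr \<Gamma>C \<union> mids_on Tr \<Gamma>C"

definition free_nodes :: "pt set set \<Rightarrow> pt set \<Rightarrow> pt set" where
  "free_nodes Tr \<Gamma>D = (verts Tr - verts_on Tr \<Gamma>D) \<union> (mids Tr - mids_on Tr \<Gamma>D)"

definition contact_setting :: "pt set \<Rightarrow> pt set \<Rightarrow> pt set \<Rightarrow> pt set \<Rightarrow> pt set set \<Rightarrow> bool" where
  "contact_setting \<Omega> \<Gamma>D \<Gamma>N \<Gamma>C Tr \<longleftrightarrow>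
     lipschitz_domain \<Omega> \<and> triangulation Tr \<and>
     closure \<Omega> = (\<Union>K\<in>Tr. convex hull K) \<and>
     openin (top_of_set (frontier \<Omega>)) \<Gamma>D \<and>
     openin (top_of_set (frontier \<Omega>)) \<Gamma>N \<and>
     openin (top_of_set (frontier \<Omega>)) \<Gamma>C \<and>
     \<Gamma>D \<inter> \<Gamma>N = {} \<and> \<Gamma>D \<inter> \<Gamma>C = {} \<and> \<Gamma>N \<inter> \<Gamma>C = {} \<and>
     frontier \<Omega> = closure \<Gamma>D \<union> closure \<Gamma>N \<union> closure \<Gamma>C \<and>
     bint Tr \<Gamma>D \<Gamma>D (\<lambda>_. 1) > 0 \<and>
     closure \<Gamma>C \<subseteq> frontier \<Omega> - closure \<Gamma>D \<and>
     (\<forall>x\<in>\<Gamma>C. \<exists>\<epsilon>>0. \<Omega> \<inter> ball x \<epsilon> = {y \<in> ball x \<epsilon>. fst y < fst x}) \<and>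
     union_of_edges Tr \<Gamma>D \<and> union_of_edges Tr \<Gamma>N \<and> union_of_edges Tr \<Gamma>C"

definition P2_on :: "pt set \<Rightarrow> (pt \<Rightarrow> real) \<Rightarrow> bool" where
  "P2_on T h \<longleftrightarrow> (\<exists>c :: nat \<Rightarrow> real. \<forall>x\<in>T.
     h x = c 0 + c 1 * fst x + c 2 * snd x + c 3 * (fst x)\<^sup>2 + c 4 * (fst x * snd x) + c 5 * (snd x)\<^sup>2)"

definition Vh_space :: "pt set \<Rightarrow> pt set \<Rightarrow> pt set set \<Rightarrow> (pt \<Rightarrow> pt) set" where
  "Vh_space \<Omega> \<Gamma>D Tr = {v. continuous_on (closure \<Omega>) v \<and>
     (\<forall>K\<in>Tr. P2_on (convex hull K) (\<lambda>x. fst (v x)) \<and> P2_on (convex hull K) (\<lambda>x. snd (v x))) \<and>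
     (\<forall>x\<in>\<Gamma>D. v x = 0)}"

definition P2_basis :: "pt set \<Rightarrow> pt set \<Rightarrow> pt set set \<Rightarrow> (pt \<Rightarrow> pt \<Rightarrow> real) \<Rightarrow> bool" where
  "P2_basis \<Omega> \<Gamma>D Tr \<psi> \<longleftrightarrow> (\<forall>z\<in>free_nodes Tr \<Gamma>D.
     continuous_on (closure \<Omega>) (\<psi> z) \<and> (\<forall>K\<in>Tr. P2_on (convex hull K) (\<psi> z)) \<and>
     (\<forall>x\<in>\<Gamma>D. \<psi> z x = 0) \<and>
     (\<forall>z'\<in>free_nodes Tr \<Gamma>D. \<psi> z z' = (if z' = z then 1 else 0)))"

definition Kh_space :: "pt set \<Rightarrow> pt set \<Rightarrow> pt set \<Rightarrow> pt set set \<Rightarrow> (pt \<Rightarrow> pt) set" where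
  "Kh_space \<Omega> \<Gamma>D \<Gamma>C Tr = {v \<in> Vh_space \<Omega> \<Gamma>D Tr. \<forall>z\<in>contact_nodes Tr \<Gamma>C. fst (v z) \<le> 0}"

(* classical partial derivative \<partial>_j h (x); set to 0 where it does not exist (a null set
   for the piecewise polynomial functions it is applied to) *)
definition pd :: "nat \<Rightarrow> (pt \<Rightarrow> real) \<Rightarrow> pt \<Rightarrow> real" where
  "pd j h x = (if (\<lambda>t. h (x + t *\<^sub>R e j)) differentiable (at 0)
               then deriv (\<lambda>t. h (x + t *\<^sub>R e j)) 0 else 0)"

definition eps :: "(pt \<Rightarrow> pt) \<Rightarrow> nat \<Rightarrow> nat \<Rightarrow> pt \<Rightarrow> real" where
  "eps v i j x = (pd j (\<lambda>y. comp i (v y)) x + pd i (\<lambda>y. comp j (v y)) x) / 2"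

definition stress :: "real \<Rightarrow> real \<Rightarrow> (pt \<Rightarrow> pt) \<Rightarrow> nat \<Rightarrow> nat \<Rightarrow> pt \<Rightarrow> real" where
  "stress chi \<mu> v i j x = chi * (eps v 1 1 x + eps v 2 2 x) * (if i = j then 1 else 0) + 2 * \<mu> * eps v i j x"

definition a_form :: "real \<Rightarrow> real \<Rightarrow> pt set \<Rightarrow> (pt \<Rightarrow> pt) \<Rightarrow> (pt \<Rightarrow> pt) \<Rightarrow> real" where
  "a_form chi \<mu> \<Omega> w v = integral \<Omega> (\<lambda>x. \<Sum>i\<in>{1,2}. \<Sum>j\<in>{1,2}. stress chi \<mu> w i j x * eps v i j x)"

definition L_form :: "pt set \<Rightarrow> pt set set \<Rightarrow> pt set \<Rightarrow> (pt \<Rightarrow> pt) \<Rightarrow> (pt \<Rightarrow> pt) \<Rightarrow> (pt \<Rightarrow> pt) \<Rightarrow> real" where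
  "L_form \<Omega> Tr \<Gamma>N f g v = integral \<Omega> (\<lambda>x. f x \<bullet> v x) + bint Tr \<Gamma>N \<Gamma>N (\<lambda>x. g x \<bullet> v x)"

definition L2_dom :: "pt set \<Rightarrow> (pt \<Rightarrow> pt) \<Rightarrow> bool" where
  "L2_dom \<Omega> f \<longleftrightarrow> f measurable_on \<Omega> \<and> (\<lambda>x. (norm (f x))\<^sup>2) integrable_on \<Omega>"

definition L2_bd :: "pt set set \<Rightarrow> pt set \<Rightarrow> (pt \<Rightarrow> pt) \<Rightarrow> bool" where
  "L2_bd Tr \<Gamma>N g \<longleftrightarrow> (\<forall>(a, b)\<in>edges_on Tr \<Gamma>N.
     (\<lambda>t. g (a + t *\<^sub>R (b - a))) measurable_on {0..1} \<and>
     (\<lambda>t. (norm (g (a + t *\<^sub>R (b - a))))\<^sup>2) integrable_on {0..1})"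

definition affine_on_seg :: "pt \<Rightarrow> pt \<Rightarrow> (pt \<Rightarrow> 'b::real_vector) \<Rightarrow> bool" where
  "affine_on_seg p r q \<longleftrightarrow> (\<forall>t\<in>{0..1}. q (p + t *\<^sub>R (r - p)) = (1 - t) *\<^sub>R q p + t *\<^sub>R q r)"

definition Qh_space :: "pt set set \<Rightarrow> pt set \<Rightarrow> (pt \<Rightarrow> 'b::real_normed_vector) set" where
  "Qh_space Tr \<Gamma>C = {q. continuous_on (closure \<Gamma>C) q \<and>
     (\<forall>(a, b)\<in>edges_on Tr \<Gamma>C. affine_on_seg a (midpoint a b) q \<and> affine_on_seg (midpoint a b) b q)}"

definition Q1_basis :: "pt set set \<Rightarrow> pt set \<Rightarrow> (pt \<Rightarrow> pt \<Rightarrow> real) \<Rightarrow> bool" where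
  "Q1_basis Tr \<Gamma>C \<phi> \<longleftrightarrow> (\<forall>z\<in>contact_nodes Tr \<Gamma>C. \<phi> z \<in> Qh_space Tr \<Gamma>C \<and>
     (\<forall>z'\<in>contact_nodes Tr \<Gamma>C. \<phi> z z' = (if z' = z then 1 else 0)))"

definition pi_h :: "pt set set \<Rightarrow> pt set \<Rightarrow> (pt \<Rightarrow> pt \<Rightarrow> real) \<Rightarrow> (pt \<Rightarrow> pt) \<Rightarrow> (pt \<Rightarrow> pt)" where
  "pi_h Tr \<Gamma>C \<psi> v = (\<lambda>x. \<Sum>z\<in>contact_nodes Tr \<Gamma>C. \<Sum>i\<in>{1,2}. (comp i (v z) * \<psi> z x) *\<^sub>R e i)"

definition patch :: "pt set set \<Rightarrow> pt \<Rightarrow> pt set" where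
  "patch Tr z = \<Union>{convex hull K | K. K \<in> Tr \<and> z \<in> convex hull K}"

definition gammaC :: "pt set set \<Rightarrow> pt set \<Rightarrow> pt \<Rightarrow> pt set" where
  "gammaC Tr \<Gamma>C z = frontier (patch Tr z) \<inter> \<Gamma>C"

definition disc_ip :: "pt set set \<Rightarrow> pt set \<Rightarrow> (pt \<Rightarrow> pt \<Rightarrow> real) \<Rightarrow> (pt \<Rightarrow> pt) \<Rightarrow> (pt \<Rightarrow> pt) \<Rightarrow> real" where
  "disc_ip Tr \<Gamma>C \<phi> w v = (\<Sum>z\<in>contact_nodes Tr \<Gamma>C. (w z \<bullet> v z) * bint Tr \<Gamma>C (gammaC Tr \<Gamma>C z) (\<phi> z))"

definition lam_tilde_i :: "pt set set \<Rightarrow> pt set \<Rightarrow> (pt \<Rightarrow> pt \<Rightarrow> real) \<Rightarrow> (pt \<Rightarrow> pt) \<Rightarrow> nat \<Rightarrow> (pt \<Rightarrow> real) \<Rightarrow> real" where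
  "lam_tilde_i Tr \<Gamma>C \<phi> lam i w =
     bint Tr \<Gamma>C \<Gamma>C (\<lambda>x. (\<Sum>z\<in>contact_nodes Tr \<Gamma>C. comp i (lam z) * \<phi> z x) * w x)"

definition lam_tilde :: "pt set set \<Rightarrow> pt set \<Rightarrow> (pt \<Rightarrow> pt \<Rightarrow> real) \<Rightarrow> (pt \<Rightarrow> pt) \<Rightarrow> (pt \<Rightarrow> pt) \<Rightarrow> real" where
  "lam_tilde Tr \<Gamma>C \<phi> lam v = (\<Sum>i\<in>{1,2}. lam_tilde_i Tr \<Gamma>C \<phi> lam i (\<lambda>x. comp i (v x)))"

end

theory Submission
  imports Defs
begin


lemma tri_indep:
  fixes K :: "pt set"
  assumes "card K = 3" "\<not> collinear K"
  shows "\<not> affine_dependent K"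
proof -
  obtain a b c where K: "K = {a,b,c}" "a\<noteq>b" "a\<noteq>c" "b\<noteq>c"
    using assms(1) by (metis card_3_iff)
  then show ?thesis using assms(2) collinear_3_eq_affine_dependent by auto
qed

lemma vert_in_hull_sub:
  fixes K :: "pt set"
  assumes "\<not> affine_dependent K" "x \<in> K" "S \<subseteq> K" "x \<in> convex hull S"
  shows "x \<in> S"
proof -
  have "\<not> affine_dependent ({x} \<union> S)"
    using assms affine_dependent_subset by (metis Un_subset_iff empty_subsetI insert_subset)
  then have "convex hull ({x} \<inter> S) = convex hull {x} \<inter> convex hull S"
    using convex_hull_Int[of "{x}" S] by simp
  then have "x \<in> convex hull ({x} \<inter> S)" using assms(4) by simp
  then show ?thesis by (cases "x \<in> S") auto
qed

lemma open_seg_in_hull_sub: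
  fixes K :: "pt set"
  assumes "\<not> affine_dependent K" "a \<in> K" "b \<in> K" "S \<subseteq> K"
    "p \<in> open_segment a b" "p \<in> convex hull S"
  shows "a \<in> S \<and> b \<in> S"
proof -
  have "\<not> affine_dependent ({a,b} \<union> S)"
    using assms affine_dependent_subset by (metis Un_subset_iff empty_subsetI insert_subset)
  then have "convex hull ({a,b} \<inter> S) = convex hull {a,b} \<inter> convex hull S"
    using convex_hull_Int[of "{a,b}" S] by simp
  moreover have "p \<in> convex hull {a,b}" using assms(5)
    by (metis open_closed_segment segment_convex_hull)
  ultimately have p: "p \<in> convex hull ({a,b} \<inter> S)" using assms(6) by simp
  have ne: "p \<noteq> a" "p \<noteq> b" using assms(5) by (auto simp: open_segment_def)
  show ?thesis
  proof (rule ccontr)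
    assume "\<not> (a \<in> S \<and> b \<in> S)"
    then have "{a,b} \<inter> S \<subseteq> {a} \<or> {a,b} \<inter> S \<subseteq> {b}" by auto
    then show False using p ne hull_mono[of "{a,b} \<inter> S" "{a}" convex] hull_mono[of "{a,b} \<inter> S" "{b}" convex]
      by auto
  qed
qed

lemma tri_facts:
  assumes "triangulation Tr" "K \<in> Tr"
  shows "\<not> affine_dependent K" "finite K"
  using assms tri_indep unfolding triangulation_def
  apply blast using assms unfolding triangulation_def by (metis card.infinite zero_neq_numeral)

lemma seg_sub_hull: "a \<in> K \<Longrightarrow> b \<in> K \<Longrightarrow> closed_segment a b \<subseteq> convex hull (K::pt set)"
  by (simp add: segment_convex_hull hull_mono)

lemma conf_edges:
  assumes T: "triangulation Tr" and ab: "(a,b) \<in> edge_pairs Tr" and cd: "(c,d) \<in> edge_pairs Tr"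
    and p1: "p \<in> open_segment a b" and p2: "p \<in> closed_segment c d"
  shows "(c = a \<and> d = b) \<or> (c = b \<and> d = a)"
proof -
  obtain K where K: "K \<in> Tr" "a \<in> K" "b \<in> K" "a \<noteq> b" using ab by (auto simp: edge_pairs_def)
  obtain K' where K': "K' \<in> Tr" "c \<in> K'" "d \<in> K'" "c \<noteq> d" using cd by (auto simp: edge_pairs_def)
  have pK: "p \<in> convex hull K" using p1 seg_sub_hull[OF K(2,3)] open_closed_segment by blast
  have pK': "p \<in> convex hull K'" using p2 seg_sub_hull[OF K'(2,3)] by blast
  have abK': "a \<in> K' \<and> b \<in> K'"
  proof (cases "K = K'")
    case True then show ?thesis using K by auto
  next
    case False
    then have "p \<in> convex hull (K \<inter> K')" using T K(1) K'(1) pK pK' unfolding triangulation_def by blast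
    then show ?thesis using open_seg_in_hull_sub[OF tri_facts(1)[OF T K(1)] K(2,3) _ p1] by blast
  qed
  have "a \<in> {c,d} \<and> b \<in> {c,d}"
    using open_seg_in_hull_sub[OF tri_facts(1)[OF T K'(1)] _ _ _ p1, of "{c,d}"] abK' K' p2
    by (simp add: segment_convex_hull)
  then show ?thesis using K(4) K'(4) by auto
qed

lemma conf_vert:
  assumes T: "triangulation Tr" and ab: "(a,b) \<in> edge_pairs Tr" and z: "z \<in> K'" "K' \<in> Tr"
    and zs: "z \<in> closed_segment a b"
  shows "z = a \<or> z = b"
proof -
  obtain K where K: "K \<in> Tr" "a \<in> K" "b \<in> K" "a \<noteq> b" using ab by (auto simp: edge_pairs_def)
  have pK: "z \<in> convex hull K" using zs seg_sub_hull[OF K(2,3)] by blast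
  have zK: "z \<in> K"
  proof (cases "K = K'")
    case True then show ?thesis using z by auto
  next
    case False
    then have "z \<in> convex hull (K \<inter> K')" using T K(1) z pK hull_subset[of K' convex] unfolding triangulation_def by blast
    then show ?thesis using vert_in_hull_sub[OF tri_facts(1)[OF T z(2)] z(1), of "K \<inter> K'"] by blast
  qed
  have "z \<in> {a,b}" using vert_in_hull_sub[OF tri_facts(1)[OF T K(1)] zK, of "{a,b}"] K zs
    by (simp add: segment_convex_hull)
  then show ?thesis by auto
qed



lemma edges_sym: "(a,b) \<in> edges_on Tr G \<Longrightarrow> (b,a) \<in> edges_on Tr G"
  by (auto simp: edges_on_def edge_pairs_def closed_segment_commute)

lemma finite_edge_pairs: assumes "triangulation Tr" shows "finite (edge_pairs Tr)"
proof -
  have "finite Tr" using assms by (simp add: triangulation_def)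
  then have "finite (\<Union>Tr)" using assms tri_facts(2) by (intro finite_Union) auto
  moreover have "edge_pairs Tr \<subseteq> \<Union>Tr \<times> \<Union>Tr" by (auto simp: edge_pairs_def)
  ultimately show ?thesis by (meson finite_SigmaI finite_subset)
qed

lemma finite_edges_on: "triangulation Tr \<Longrightarrow> finite (edges_on Tr G)"
  using finite_edge_pairs by (metis (no_types, lifting) edges_on_def finite_subset mem_Collect_eq case_prodE subsetI)

lemma finite_contact: assumes "triangulation Tr" shows "finite (contact_nodes Tr G)"
proof -
  have "finite Tr" using assms by (simp add: triangulation_def)
  then have "finite (\<Union>Tr)" using assms tri_facts(2) by (intro finite_Union) auto
  then have "finite (verts_on Tr G)" by (rule finite_subset[rotated]) (auto simp: verts_on_def verts_def)
  moreover have "mids_on Tr G = (\<lambda>(a,b). midpoint a b) ` edges_on Tr G"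
    unfolding mids_on_def by (auto simp: image_iff; metis case_prod_conv)
  ultimately show ?thesis using finite_edges_on[OF assms] by (simp add: contact_nodes_def)
qed

lemma edge_nodes:
  assumes "(a,b) \<in> edges_on Tr G"
  shows "a \<in> contact_nodes Tr G" "b \<in> contact_nodes Tr G" "midpoint a b \<in> contact_nodes Tr G"
  using assms apply (auto simp: contact_nodes_def verts_on_def verts_def edges_on_def edge_pairs_def)[2]
  unfolding contact_nodes_def mids_on_def using assms by blast

lemma phi_vals: "Q1_basis Tr G \<phi> \<Longrightarrow> z \<in> contact_nodes Tr G \<Longrightarrow> z' \<in> contact_nodes Tr G \<Longrightarrow> 0 \<le> \<phi> z z'"
  by (auto simp: Q1_basis_def)

lemma half1: "a + (2*u) *\<^sub>R (midpoint a b - a) = a + u *\<^sub>R (b - (a::pt))"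
  by (cases a; cases b) (auto simp: midpoint_def field_simps)
lemma half2: "midpoint a b + (2*u - 1) *\<^sub>R (b - midpoint a b) = a + u *\<^sub>R (b - (a::pt))"
  by (cases a; cases b) (auto simp: midpoint_def field_simps)

lemma phi_nonneg_edge:
  assumes phi: "Q1_basis Tr G \<phi>" and z: "z \<in> contact_nodes Tr G" and ab: "(a,b) \<in> edges_on Tr G"
    and u: "0 \<le> u" "u \<le> 1"
  shows "0 \<le> \<phi> z (a + u *\<^sub>R (b - a))"
proof -
  have q: "\<phi> z \<in> Qh_space Tr G" using phi z by (simp add: Q1_basis_def)
  then have aff: "affine_on_seg a (midpoint a b) (\<phi> z)" "affine_on_seg (midpoint a b) b (\<phi> z)"
    using ab by (auto simp: Qh_space_def)
  have v: "0 \<le> \<phi> z a" "0 \<le> \<phi> z b" "0 \<le> \<phi> z (midpoint a b)"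
    using phi_vals[OF phi z] edge_nodes[OF ab] by auto
  show ?thesis
  proof (cases "u \<le> 1/2")
    case True
    have "\<phi> z (a + (2*u) *\<^sub>R (midpoint a b - a)) = (1 - 2*u) * \<phi> z a + (2*u) * \<phi> z (midpoint a b)"
      using aff(1) u True unfolding affine_on_seg_def by simp
    then have "\<phi> z (a + u *\<^sub>R (b - a)) = (1 - 2*u) * \<phi> z a + (2*u) * \<phi> z (midpoint a b)"
      by (simp only: half1)
    then show ?thesis using v True u by simp
  next
    case False
    have "\<phi> z (midpoint a b + (2*u-1) *\<^sub>R (b - midpoint a b)) = (1 - (2*u-1)) * \<phi> z (midpoint a b) + (2*u-1) * \<phi> z b"
      using aff(2) u False unfolding affine_on_seg_def by simp
    then have "\<phi> z (a + u *\<^sub>R (b - a)) = (1 - (2*u-1)) * \<phi> z (midpoint a b) + (2*u-1) * \<phi> z b"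
      by (simp only: half2)
    then show ?thesis using v False u by simp
  qed
qed



lemma setting_facts:
  assumes "contact_setting \<Omega> \<Gamma>D \<Gamma>N \<Gamma>C Tr"
  shows "\<Gamma>C \<subseteq> frontier \<Omega>" "closure \<Gamma>C \<subseteq> frontier \<Omega>" "closure \<Omega> = (\<Union>K\<in>Tr. convex hull K)"
    "triangulation Tr" "\<exists>Op. open Op \<and> \<Gamma>C = frontier \<Omega> \<inter> Op"
    "closure \<Gamma>C \<inter> closure \<Gamma>D = {}"
    "union_of_edges Tr \<Gamma>C"
    "\<forall>x\<in>\<Gamma>C. \<exists>\<epsilon>>0. \<Omega> \<inter> ball x \<epsilon> = {y \<in> ball x \<epsilon>. fst y < fst x}"
proof -
  have o: "openin (top_of_set (frontier \<Omega>)) \<Gamma>C" using assms unfolding contact_setting_def by blast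
  then show s: "\<Gamma>C \<subseteq> frontier \<Omega>" by (meson openin_imp_subset)
  then show "closure \<Gamma>C \<subseteq> frontier \<Omega>" by (simp add: closure_minimal)
  show "\<exists>Op. open Op \<and> \<Gamma>C = frontier \<Omega> \<inter> Op" using o by (simp add: openin_open)
qed (use assms in \<open>auto simp: contact_setting_def\<close>)

lemma frontier_patch:
  assumes set: "contact_setting \<Omega> \<Gamma>D \<Gamma>N \<Gamma>C Tr" and x: "x \<in> \<Gamma>C" and K: "K \<in> Tr" "x \<in> convex hull K"
    "z \<in> convex hull K"
  shows "x \<in> frontier (patch Tr z)"
proof -
  have xp: "x \<in> patch Tr z" using K by (auto simp: patch_def)
  have pc: "patch Tr z \<subseteq> closure \<Omega>" using setting_facts(3)[OF set] by (auto simp: patch_def)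
  obtain \<epsilon> where e: "\<epsilon> > 0" "\<Omega> \<inter> ball x \<epsilon> = {y \<in> ball x \<epsilon>. fst y < fst x}"
    using setting_facts(8)[OF set] x by blast
  have "x \<notin> interior (patch Tr z)"
  proof
    assume "x \<in> interior (patch Tr z)"
    then obtain r where r: "r > 0" "ball x r \<subseteq> patch Tr z"
      using mem_interior by blast
    define \<rho> where "\<rho> = min r \<epsilon> / 2"
    have rho: "\<rho> > 0" "\<rho> < r" "2*\<rho> \<le> \<epsilon>" using r e by (auto simp: \<rho>_def)
    define y where "y = x + (\<rho>, 0)"
    have dy: "dist x y = \<rho>" using rho by (simp add: y_def dist_norm norm_Pair)
    have "y \<in> ball x r" using dy rho by simp
    then have "y \<in> closure \<Omega>" using r pc by blast
    then obtain w where w: "w \<in> \<Omega>" "dist w y < \<rho>" using closure_approachable rho by blast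
    have "dist x w < \<epsilon>" using dist_triangle[of x w y] dy w rho by (simp add: dist_commute)
    then have "w \<in> \<Omega> \<inter> ball x \<epsilon>" using w(1) by simp
    then have "fst w < fst x" unfolding e(2) by blast
    moreover have "dist (fst w) (fst y) < \<rho>" using dist_fst_le[of w y] w by simp
    ultimately show False by (simp add: y_def dist_real_def)
  qed
  then show ?thesis using xp by (simp add: frontier_def closure_subset[THEN subsetD])
qed

lemma seg_param: "a + t *\<^sub>R (b - a) = (1 - t) *\<^sub>R a + t *\<^sub>R (b::pt)"
  by (simp add: algebra_simps)

lemma dens:
  assumes set: "contact_setting \<Omega> \<Gamma>D \<Gamma>N \<Gamma>C Tr" and ab: "(a,b) \<in> edges_on Tr \<Gamma>C"
    and t0: "0 < t0" "t0 < 1" and e: "ee > 0"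
  shows "\<exists>t. 0 \<le> t \<and> t \<le> 1 \<and> \<bar>t - t0\<bar> < ee \<and> a + t *\<^sub>R (b - a) \<in> \<Gamma>C"
proof -
  let ?E = "edges_on Tr \<Gamma>C"
  have T: "triangulation Tr" using setting_facts[OF set] by blast
  have abE: "(a,b) \<in> edge_pairs Tr" "closed_segment a b \<subseteq> closure \<Gamma>C" using ab by (auto simp: edges_on_def)
  then have anb: "a \<noteq> b" by (auto simp: edge_pairs_def)
  define p0 where "p0 = a + t0 *\<^sub>R (b - a)"
  have p0o: "p0 \<in> open_segment a b" unfolding p0_def seg_param using t0 anb in_segment(2) by blast
  have p0c: "p0 \<in> closed_segment a b" using p0o open_closed_segment by blast
  define U where "U = (\<Union>cd\<in>{cd\<in>?E. p0 \<notin> closed_segment (fst cd) (snd cd)}. closed_segment (fst cd) (snd cd))"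
  have "closed U" unfolding U_def using finite_edges_on[OF T] by (intro closed_UN) auto
  moreover have "p0 \<notin> U" by (auto simp: U_def)
  ultimately obtain r where r: "r > 0" "ball p0 r \<subseteq> - U"
    by (metis Compl_iff open_Compl open_contains_ball)
  have nba: "norm (b - a) > 0" using anb by simp
  have "p0 \<in> closure \<Gamma>C" using p0c abE by blast
  then obtain q where q: "q \<in> \<Gamma>C" "dist q p0 < min r (ee * norm (b - a))"
    using closure_approachable[of p0 \<Gamma>C] r(1) e nba by (metis mult_pos_pos min_less_iff_conj)
  have "q \<in> closure \<Gamma>C" using q closure_subset by blast
  then obtain c d where cd: "(c,d) \<in> ?E" "q \<in> closed_segment c d"
    using setting_facts(7)[OF set] unfolding union_of_edges_def by auto
  have "p0 \<in> closed_segment c d"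
  proof (rule ccontr)
    assume "p0 \<notin> closed_segment c d"
    then have "q \<in> U" unfolding U_def using cd by (intro UN_I[of "(c,d)"]) auto
    moreover have "q \<in> ball p0 r" using q by (simp add: dist_commute)
    ultimately show False using r by blast
  qed
  then have "(c = a \<and> d = b) \<or> (c = b \<and> d = a)"
    using conf_edges[OF T abE(1) _ p0o] cd(1) by (auto simp: edges_on_def)
  then have "q \<in> closed_segment a b" using cd closed_segment_commute by metis
  then obtain t where t: "0 \<le> t" "t \<le> 1" "q = a + t *\<^sub>R (b - a)"
    using in_segment(1) seg_param by metis
  have "q - p0 = (t - t0) *\<^sub>R (b - a)" by (simp add: t p0_def algebra_simps)
  then have "dist q p0 = \<bar>t - t0\<bar> * norm (b - a)" by (simp add: dist_norm)
  then have "\<bar>t - t0\<bar> < ee" using q nba by simp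
  then show ?thesis using t q by blast
qed

lemma interval_in:
  assumes set: "contact_setting \<Omega> \<Gamma>D \<Gamma>N \<Gamma>C Tr" and ab: "(a,b) \<in> edges_on Tr \<Gamma>C"
    and al: "0 < \<alpha>" "\<alpha> < \<beta>" "\<beta> < 1"
  shows "\<exists>t1 t2. \<alpha> < t1 \<and> t1 < t2 \<and> t2 < \<beta> \<and> (\<forall>s\<in>{t1..t2}. a + s *\<^sub>R (b - a) \<in> \<Gamma>C)"
proof -
  obtain t where t: "0 \<le> t" "t \<le> 1" "\<bar>t - (\<alpha>+\<beta>)/2\<bar> < (\<beta>-\<alpha>)/2" "a + t *\<^sub>R (b - a) \<in> \<Gamma>C"
    using dens[OF set ab, of "(\<alpha>+\<beta>)/2" "(\<beta>-\<alpha>)/2"] al by auto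
  have tab1: "\<alpha> < t" using t(3) by (simp add: abs_less_iff field_simps)
  have tab2: "t < \<beta>" using t(3) by (simp add: abs_less_iff field_simps)
  note tab = tab1 tab2
  obtain Op where O: "open Op" "\<Gamma>C = frontier \<Omega> \<inter> Op" using setting_facts(5)[OF set] by blast
  obtain r where r: "r > 0" "ball (a + t *\<^sub>R (b - a)) r \<subseteq> Op" using O t(4) open_contains_ball by blast
  have abE: "(a,b) \<in> edge_pairs Tr" "closed_segment a b \<subseteq> closure \<Gamma>C" using ab by (auto simp: edges_on_def)
  then have nba: "norm (b - a) > 0" by (auto simp: edge_pairs_def)
  define \<delta> where "\<delta> = min (r / (2 * norm (b - a))) ((\<beta> - t)/2)"
  have d: "\<delta> > 0" "\<delta> * norm (b - a) < r" "t + \<delta> < \<beta>"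
    using r nba tab by (auto simp: \<delta>_def min_def field_simps)
  have "a + s *\<^sub>R (b - a) \<in> \<Gamma>C" if s: "s \<in> {t..t+\<delta>}" for s
  proof -
    have "(a + t *\<^sub>R (b - a)) - (a + s *\<^sub>R (b - a)) = (t - s) *\<^sub>R (b - a)" by (simp add: algebra_simps)
    then have "dist (a + t *\<^sub>R (b - a)) (a + s *\<^sub>R (b - a)) = \<bar>t - s\<bar> * norm (b - a)" by (simp add: dist_norm)
    also have "\<dots> \<le> \<delta> * norm (b - a)" using s by (intro mult_right_mono) auto
    finally have "a + s *\<^sub>R (b - a) \<in> Op" using r d by auto
    moreover have "a + s *\<^sub>R (b - a) \<in> closed_segment a b"
      unfolding seg_param in_segment by (rule exI[of _ s]) (use s tab d al t in auto)
    ultimately show ?thesis using abE setting_facts(2)[OF set] O by blast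
  qed
  then show ?thesis using tab d by (intro exI[of _ t] exI[of _ "t + \<delta>"]) auto
qed



lemma seg_int_nonneg:
  assumes "\<And>t. t \<in> {0..1} \<Longrightarrow> 0 \<le> F (a + t *\<^sub>R (b - a))"
  shows "0 \<le> seg_integral a b F"
proof -
  have "0 \<le> integral {0..1::real} (\<lambda>t. F (a + t *\<^sub>R (b - a)))"
  proof (cases "(\<lambda>t. F (a + t *\<^sub>R (b - a))) integrable_on {0..1::real}")
    case True then show ?thesis using assms by (intro integral_nonneg) auto
  qed (simp add: not_integrable_integral)
  then show ?thesis by (simp add: seg_integral_def)
qed

lemma closed_leb: "closed (C::real set) \<Longrightarrow> C \<in> sets lebesgue"
  by (metis borel_closed sets_completionI_sets sets_lborel)
lemma open_leb: "open (C::real set) \<Longrightarrow> C \<in> sets lebesgue"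
  by (metis borel_open sets_completionI_sets sets_lborel)

lemma pos_core:
  assumes set: "contact_setting \<Omega> \<Gamma>D \<Gamma>N \<Gamma>C Tr" and phi: "Q1_basis Tr \<Gamma>C \<phi>"
    and z: "z \<in> contact_nodes Tr \<Gamma>C" and ab: "(a,b) \<in> edges_on Tr \<Gamma>C"
    and K: "K \<in> Tr" "a \<in> K" "b \<in> K" "z \<in> convex hull K"
    and al: "0 < \<alpha>" "\<alpha> < \<beta>" "\<beta> < 1"
    and big: "\<And>s. s \<in> {\<alpha>..\<beta>} \<Longrightarrow> 1/2 \<le> \<phi> z (a + s *\<^sub>R (b - a))"
  shows "bint Tr \<Gamma>C (gammaC Tr \<Gamma>C z) (\<phi> z) > 0"
proof -
  obtain t1 t2 where t: "\<alpha> < t1" "t1 < t2" "t2 < \<beta>" and tin: "\<And>s. s\<in>{t1..t2} \<Longrightarrow> a + s *\<^sub>R (b - a) \<in> \<Gamma>C"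
    using interval_in[OF set ab al] by blast
  define \<gamma> where "\<gamma> = (\<lambda>s::real. a + s *\<^sub>R (b - a))"
  define h where "h = (\<lambda>s. indicator (gammaC Tr \<Gamma>C z) (\<gamma> s) * \<phi> z (\<gamma> s))"
  have abE: "closed_segment a b \<subseteq> closure \<Gamma>C" using ab by (auto simp: edges_on_def)
  have gseg: "\<gamma> s \<in> closed_segment a b" if "s \<in> {0..1}" for s
    unfolding \<gamma>_def seg_param in_segment using that by auto
  have h0: "0 \<le> h s" if "s \<in> {0..1}" for s
    using phi_nonneg_edge[OF phi z ab, of s] that by (auto simp: h_def \<gamma>_def)
  have h1: "1/2 \<le> h s" if s: "s \<in> {t1..t2}" for s
  proof -
    have "\<gamma> s \<in> \<Gamma>C" using tin s by (simp add: \<gamma>_def)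
    moreover have "\<gamma> s \<in> convex hull K" using gseg[of s] s t al seg_sub_hull[OF K(2,3)] by auto
    ultimately have "\<gamma> s \<in> gammaC Tr \<Gamma>C z"
      using frontier_patch[OF set _ K(1) _ K(4)] by (simp add: gammaC_def)
    then show ?thesis using big[of s] s t by (simp add: h_def \<gamma>_def)
  qed
  have gc: "continuous_on UNIV \<gamma>" unfolding \<gamma>_def by (intro continuous_intros)
  obtain Op where O: "open Op" "\<Gamma>C = frontier \<Omega> \<inter> Op" using setting_facts(5)[OF set] by blast
  define G where "G = \<gamma> -` (frontier (patch Tr z) \<inter> frontier \<Omega>) \<inter> \<gamma> -` Op"
  have "closed (\<gamma> -` (frontier (patch Tr z) \<inter> frontier \<Omega>))"
    using gc by (intro continuous_closed_vimage) (auto simp: continuous_on_eq_continuous_at)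
  moreover have "open (\<gamma> -` Op)"
    using gc O by (intro continuous_open_vimage) (auto simp: continuous_on_eq_continuous_at)
  ultimately have Gm: "G \<in> sets lebesgue" unfolding G_def using closed_leb open_leb by blast
  have hG: "h = (\<lambda>s. indicator G s * \<phi> z (\<gamma> s))"
    unfolding h_def G_def gammaC_def O(2) by (auto simp: indicator_def fun_eq_iff)
  have phic: "continuous_on (closure \<Gamma>C) (\<phi> z)" using phi z by (simp add: Q1_basis_def Qh_space_def)
  have gcont: "continuous_on {0..1} (\<lambda>s. \<phi> z (\<gamma> s))"
    using continuous_on_compose2[OF phic continuous_on_subset[OF gc]] gseg abE by blast
  have "h absolutely_integrable_on {0..1}"
    unfolding hG
  proof (rule absolutely_integrable_bounded_measurable_product_real)
    show "indicator G \<in> borel_measurable (lebesgue_on {0..1})"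
      by (intro measurable_restrict_space1 borel_measurable_indicator Gm)
    show "{0..1::real} \<in> sets lebesgue" by simp
    show "bounded (indicator G ` {0..1::real} :: real set)"
      by (rule bounded_subset[of "{0,1}"]) (auto simp: indicator_def)
    show "(\<lambda>s. \<phi> z (\<gamma> s)) absolutely_integrable_on {0..1}"
      using gcont by (rule absolutely_integrable_continuous_real)
  qed
  then have hint: "h integrable_on {0..1}" using absolutely_integrable_on_def by blast
  define k where "k = (\<lambda>s::real. if s \<in> {t1..t2} then (1/2::real) else 0)"
  have kint: "k integrable_on {0..1}" unfolding k_def integrable_restrict_Int
    using t al integrable_continuous_real[OF continuous_on_const] by (simp add: Int_absorb2)
  have ik: "integral {0..1} k = (t2 - t1) / 2" unfolding k_def integral_restrict_Int
    using t al by (simp add: Int_absorb2)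
  have kh: "integral {0..1} k \<le> integral {0..1} h"
    using kint hint h0 h1 by (intro integral_le) (auto simp: k_def)
  have "(0::real) < (t2 - t1) / 2" using t by simp
  then have ih: "integral {0..1} h > 0" using ik kh by linarith
  have nba: "norm (b - a) > 0" using ab by (auto simp: edges_on_def edge_pairs_def)
  have segpos: "seg_integral a b (\<lambda>x. indicator (gammaC Tr \<Gamma>C z) x * \<phi> z x) > 0"
    unfolding seg_integral_def using ih nba by (simp add: h_def \<gamma>_def)
  let ?F = "\<lambda>(c,d). seg_integral c d (\<lambda>x. indicator (gammaC Tr \<Gamma>C z) x * \<phi> z x)"
  have T: "triangulation Tr" using setting_facts[OF set] by blast
  have "?F (a,b) \<le> sum ?F (edges_on Tr \<Gamma>C)"
  proof (rule member_le_sum[OF ab])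
    show "finite (edges_on Tr \<Gamma>C)" using finite_edges_on[OF T] .
    fix cd assume "cd \<in> edges_on Tr \<Gamma>C - {(a,b)}"
    then obtain c d where cd: "cd = (c,d)" "(c,d) \<in> edges_on Tr \<Gamma>C" by (cases cd) auto
    show "0 \<le> ?F cd" unfolding cd(1) using phi_nonneg_edge[OF phi z cd(2)]
      by (auto intro!: seg_int_nonneg simp: indicator_def)
  qed
  then show ?thesis using segpos unfolding bint_def by simp
qed



lemma phi_self: "Q1_basis Tr G \<phi> \<Longrightarrow> z \<in> contact_nodes Tr G \<Longrightarrow> \<phi> z z = 1"
  by (auto simp: Q1_basis_def)

lemma Bpos:
  assumes set: "contact_setting \<Omega> \<Gamma>D \<Gamma>N \<Gamma>C Tr" and phi: "Q1_basis Tr \<Gamma>C \<phi>"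
    and z: "z \<in> contact_nodes Tr \<Gamma>C"
  shows "bint Tr \<Gamma>C (gammaC Tr \<Gamma>C z) (\<phi> z) > 0"
proof -
  have T: "triangulation Tr" using setting_facts[OF set] by blast
  have q: "\<phi> z \<in> Qh_space Tr \<Gamma>C" using phi z by (simp add: Q1_basis_def)
  consider (v) "z \<in> verts_on Tr \<Gamma>C" | (m) "z \<in> mids_on Tr \<Gamma>C" using z by (auto simp: contact_nodes_def)
  then show ?thesis
  proof cases
    case v
    then obtain K' where K': "K' \<in> Tr" "z \<in> K'" "z \<in> closure \<Gamma>C" by (auto simp: verts_on_def verts_def)
    then obtain a b where ab: "(a,b) \<in> edges_on Tr \<Gamma>C" "z \<in> closed_segment a b"
      using setting_facts(7)[OF set] unfolding union_of_edges_def by auto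
    then have "z = a \<or> z = b" using conf_vert[OF T _ K'(2,1)] by (auto simp: edges_on_def)
    then obtain b' where zb: "(z,b') \<in> edges_on Tr \<Gamma>C" using ab edges_sym by metis
    then obtain K where K: "K \<in> Tr" "z \<in> K" "b' \<in> K" by (auto simp: edges_on_def edge_pairs_def)
    have aff: "affine_on_seg z (midpoint z b') (\<phi> z)" using q zb by (auto simp: Qh_space_def)
    have mv: "0 \<le> \<phi> z (midpoint z b')" using phi_vals[OF phi z edge_nodes(3)[OF zb]] .
    show ?thesis
    proof (rule pos_core[OF set phi z zb K(1,2,3) _ _ _ _ ])
      show "z \<in> convex hull K" by (rule hull_inc[OF K(2)])
      fix s :: real assume s: "s \<in> {1/8..1/4}"
      have "\<phi> z (z + (2 * s) *\<^sub>R (midpoint z b' - z)) = (1 - 2 * s) * \<phi> z z + (2 * s) * \<phi> z (midpoint z b')"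
      proof -
        have "2 * s \<in> {0..1}" using s by auto
        from aff[unfolded affine_on_seg_def, rule_format, OF this] show ?thesis by (simp only: real_scaleR_def)
      qed
      then have "\<phi> z (z + s *\<^sub>R (b' - z)) = (1 - 2 * s) + (2 * s) * \<phi> z (midpoint z b')"
        using phi_self[OF phi z] by (simp only: half1) simp
      moreover have "0 \<le> (2 * s) * \<phi> z (midpoint z b')" using s mv by simp
      ultimately show "1/2 \<le> \<phi> z (z + s *\<^sub>R (b' - z))" using s by simp
    qed auto
  next
    case m
    then obtain a b where ab: "(a,b) \<in> edges_on Tr \<Gamma>C" "z = midpoint a b" by (auto simp: mids_on_def)
    then obtain K where K: "K \<in> Tr" "a \<in> K" "b \<in> K" by (auto simp: edges_on_def edge_pairs_def)
    have aff: "affine_on_seg a z (\<phi> z)" using q ab by (auto simp: Qh_space_def)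
    have av: "0 \<le> \<phi> z a" using phi_vals[OF phi z edge_nodes(1)[OF ab(1)]] .
    show ?thesis
    proof (rule pos_core[OF set phi z ab(1) K(1,2,3) _ _ _ _ ])
      show "z \<in> convex hull K" using ab(2) seg_sub_hull[OF K(2,3)] by auto
      fix s :: real assume s: "s \<in> {1/4..1/2}"
      have "\<phi> z (a + (2 * s) *\<^sub>R (midpoint a b - a)) = (1 - 2 * s) * \<phi> z a + (2 * s) * \<phi> z (midpoint a b)"
      proof -
        have "2 * s \<in> {0..1}" using s by auto
        from aff[unfolded affine_on_seg_def, rule_format, OF this] show ?thesis using ab(2) by (simp only: real_scaleR_def)
      qed
      then have "\<phi> z (a + s *\<^sub>R (b - a)) = (1 - 2 * s) * \<phi> z a + (2 * s)"
        using phi_self[OF phi z] ab(2) by (simp only: half1)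
      moreover have "0 \<le> (1 - 2 * s) * \<phi> z a" using s av by simp
      ultimately show "1/2 \<le> \<phi> z (a + s *\<^sub>R (b - a))" using s by simp
    qed auto
  qed
qed



lemma P2_on_add: "P2_on T f \<Longrightarrow> P2_on T g \<Longrightarrow> P2_on T (\<lambda>x. f x + g x)"
proof -
  assume "P2_on T f" "P2_on T g"
  then obtain c d :: "nat \<Rightarrow> real" where c: "\<forall>x\<in>T. f x = c 0 + c 1 * fst x + c 2 * snd x + c 3 * (fst x)\<^sup>2 + c 4 * (fst x * snd x) + c 5 * (snd x)\<^sup>2"
    and d: "\<forall>x\<in>T. g x = d 0 + d 1 * fst x + d 2 * snd x + d 3 * (fst x)\<^sup>2 + d 4 * (fst x * snd x) + d 5 * (snd x)\<^sup>2"
    unfolding P2_on_def by blast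
  show ?thesis unfolding P2_on_def
    by (rule exI[of _ "\<lambda>i. c i + d i"]) (use c d in \<open>auto simp: algebra_simps\<close>)
qed

lemma P2_on_scale: "P2_on T f \<Longrightarrow> P2_on T (\<lambda>x. r * f x)"
proof -
  assume "P2_on T f"
  then obtain c :: "nat \<Rightarrow> real" where c: "\<forall>x\<in>T. f x = c 0 + c 1 * fst x + c 2 * snd x + c 3 * (fst x)\<^sup>2 + c 4 * (fst x * snd x) + c 5 * (snd x)\<^sup>2"
    unfolding P2_on_def by blast
  show ?thesis unfolding P2_on_def
    by (rule exI[of _ "\<lambda>i. r * c i"]) (use c in \<open>auto simp: algebra_simps\<close>)
qed

lemma P2_on_zero: "P2_on T (\<lambda>x. 0)"
  unfolding P2_on_def by (rule exI[of _ "\<lambda>i. 0"]) simp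

lemma e_comps: "i \<in> {1,2} \<Longrightarrow> fst (r *\<^sub>R e i) = (if i = 1 then r else 0) \<and> snd (r *\<^sub>R e i) = (if i = 1 then 0 else r)"
  by (auto simp: e_def)

lemma contact_free:
  assumes set: "contact_setting \<Omega> \<Gamma>D \<Gamma>N \<Gamma>C Tr"
  shows "contact_nodes Tr \<Gamma>C \<subseteq> free_nodes Tr \<Gamma>D"
proof
  fix z assume z: "z \<in> contact_nodes Tr \<Gamma>C"
  have dis: "closure \<Gamma>C \<inter> closure \<Gamma>D = {}" using setting_facts(6)[OF set] .
  have mC: "midpoint a b \<in> closure G" if "(a,b) \<in> edges_on Tr G" for a b G
    using that by (auto simp: edges_on_def)
  show "z \<in> free_nodes Tr \<Gamma>D"
  proof (cases "z \<in> verts_on Tr \<Gamma>C")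
    case True then show ?thesis using dis by (auto simp: free_nodes_def verts_on_def)
  next
    case False
    then have "z \<in> mids_on Tr \<Gamma>C" using z by (simp add: contact_nodes_def)
    then obtain a b where ab: "(a,b) \<in> edges_on Tr \<Gamma>C" "z = midpoint a b" by (auto simp: mids_on_def)
    then have zm: "z \<in> mids Tr" unfolding mids_def edges_on_def by blast
    have "z \<notin> mids_on Tr \<Gamma>D"
    proof
      assume "z \<in> mids_on Tr \<Gamma>D"
      then obtain c d where "(c,d) \<in> edges_on Tr \<Gamma>D" "z = midpoint c d" by (auto simp: mids_on_def)
      then have "z \<in> closure \<Gamma>D" using mC by blast
      moreover have "z \<in> closure \<Gamma>C" using mC ab by blast
      ultimately show False using dis by blast
    qed
    then show ?thesis using zm by (auto simp: free_nodes_def)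
  qed
qed



lemma aff_scale: "affine_on_seg p r q \<Longrightarrow> affine_on_seg p r (\<lambda>x. (c * q x) *\<^sub>R (v::pt))"
  unfolding affine_on_seg_def
proof
  fix t :: real assume A: "\<forall>t\<in>{0..1}. q (p + t *\<^sub>R (r - p)) = (1 - t) *\<^sub>R q p + t *\<^sub>R q r" and t: "t \<in> {0..1}"
  then have "q (p + t *\<^sub>R (r - p)) = (1 - t) * q p + t * q r" by simp
  then have "(c * q (p + t *\<^sub>R (r - p))) *\<^sub>R v = (c * ((1 - t) * q p + t * q r)) *\<^sub>R v"
    by (simp only:)
  also have "\<dots> = (1 - t) *\<^sub>R (c * q p) *\<^sub>R v + t *\<^sub>R (c * q r) *\<^sub>R v"
    by (simp add: algebra_simps scaleR_add_left)
  finally show "(c * q (p + t *\<^sub>R (r - p))) *\<^sub>R v = (1 - t) *\<^sub>R (c * q p) *\<^sub>R v + t *\<^sub>R (c * q r) *\<^sub>R v" .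
qed

lemma sum_e: "i \<in> {1,2} \<Longrightarrow> (\<Sum>j\<in>{1,2::nat}. (comp j (r *\<^sub>R e i) * s) *\<^sub>R e j) = (r * s) *\<^sub>R e i"
  by (auto simp: e_def comp_def)

lemma inner_e: "i \<in> {1,2} \<Longrightarrow> (l::pt) \<bullet> (c *\<^sub>R e i) = c * comp i l"
  by (cases l) (auto simp: e_def comp_def)

lemma inner_e1: "i \<in> {1,2} \<Longrightarrow> (l::pt) \<bullet> e i = comp i l"
  by (cases l) (auto simp: e_def comp_def)

lemma key:
  assumes set: "contact_setting \<Omega> \<Gamma>D \<Gamma>N \<Gamma>C Tr"
    and psi: "P2_basis \<Omega> \<Gamma>D Tr \<psi>"
    and phi: "Q1_basis Tr \<Gamma>C \<phi>"
    and uK: "u \<in> Kh_space \<Omega> \<Gamma>D \<Gamma>C Tr"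
    and VI: "\<forall>v\<in>Kh_space \<Omega> \<Gamma>D \<Gamma>C Tr.
               a_form chi \<mu> \<Omega> u (\<lambda>x. v x - u x) \<ge> L_form \<Omega> Tr \<Gamma>N f g (\<lambda>x. v x - u x)"
    and lamdef: "\<forall>w\<in>Qh_space Tr \<Gamma>C.
               disc_ip Tr \<Gamma>C \<phi> lam w
                 = L_form \<Omega> Tr \<Gamma>N f g (pi_h Tr \<Gamma>C \<psi> w) - a_form chi \<mu> \<Omega> u (pi_h Tr \<Gamma>C \<psi> w)"
    and z: "z \<in> contact_nodes Tr \<Gamma>C" and i: "i \<in> {1,2}" and ci: "i = 2 \<or> c \<le> 0"
  shows "c * comp i (lam z) * bint Tr \<Gamma>C (gammaC Tr \<Gamma>C z) (\<phi> z) \<le> 0"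
proof -
  let ?CN = "contact_nodes Tr \<Gamma>C"
  have T: "triangulation Tr" using setting_facts[OF set] by blast
  have fin: "finite ?CN" using finite_contact[OF T] .
  have CF: "?CN \<subseteq> free_nodes Tr \<Gamma>D" using contact_free[OF set] .
  have phiz: "\<phi> z \<in> Qh_space Tr \<Gamma>C" "\<And>z'. z' \<in> ?CN \<Longrightarrow> \<phi> z z' = (if z' = z then 1 else 0)"
    using phi z by (auto simp: Q1_basis_def)
  have zf: "z \<in> free_nodes Tr \<Gamma>D" using z CF by blast
  have psiz: "continuous_on (closure \<Omega>) (\<psi> z)" "\<And>K. K \<in> Tr \<Longrightarrow> P2_on (convex hull K) (\<psi> z)"
    "\<And>x. x \<in> \<Gamma>D \<Longrightarrow> \<psi> z x = 0" "\<And>z'. z' \<in> free_nodes Tr \<Gamma>D \<Longrightarrow> \<psi> z z' = (if z' = z then 1 else 0)"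
    using psi zf unfolding P2_basis_def by blast+
  define w where "w = (\<lambda>x. (c * \<phi> z x) *\<^sub>R e i)"
  have wQ: "w \<in> Qh_space Tr \<Gamma>C"
    using phiz(1) unfolding Qh_space_def w_def
    by (auto intro!: continuous_intros aff_scale)
  have disc: "disc_ip Tr \<Gamma>C \<phi> lam w = c * comp i (lam z) * bint Tr \<Gamma>C (gammaC Tr \<Gamma>C z) (\<phi> z)"
  proof -
    have "disc_ip Tr \<Gamma>C \<phi> lam w = (\<Sum>z'\<in>?CN. if z' = z then c * comp i (lam z) * bint Tr \<Gamma>C (gammaC Tr \<Gamma>C z) (\<phi> z) else 0)"
      unfolding disc_ip_def
      by (rule sum.cong) (auto simp: w_def phiz(2) inner_e[OF i] inner_e1[OF i])
    also have "\<dots> = c * comp i (lam z) * bint Tr \<Gamma>C (gammaC Tr \<Gamma>C z) (\<phi> z)"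
      using fin z by simp
    finally show ?thesis .
  qed
  define \<pi> where "\<pi> = (\<lambda>x. (c * \<psi> z x) *\<^sub>R e i)"
  have pi: "pi_h Tr \<Gamma>C \<psi> w = \<pi>"
  proof
    fix x
    have "pi_h Tr \<Gamma>C \<psi> w x = (\<Sum>z'\<in>?CN. if z' = z then (c * \<psi> z x) *\<^sub>R e i else 0)"
      unfolding pi_h_def
    proof (rule sum.cong)
      fix z' assume z': "z' \<in> ?CN"
      show "(\<Sum>j\<in>{1,2}. (comp j (w z') * \<psi> z' x) *\<^sub>R e j) = (if z' = z then (c * \<psi> z x) *\<^sub>R e i else 0)"
        using sum_e[OF i, of "c * \<phi> z z'" "\<psi> z' x"] phiz(2)[OF z'] by (auto simp: w_def)
    qed simp
    also have "\<dots> = \<pi> x" using fin z by (simp add: \<pi>_def)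
    finally show "pi_h Tr \<Gamma>C \<psi> w x = \<pi> x" .
  qed
  have uV: "continuous_on (closure \<Omega>) u" "\<And>K. K \<in> Tr \<Longrightarrow> P2_on (convex hull K) (\<lambda>x. fst (u x)) \<and> P2_on (convex hull K) (\<lambda>x. snd (u x))"
    "\<And>x. x \<in> \<Gamma>D \<Longrightarrow> u x = 0" "\<And>z'. z' \<in> ?CN \<Longrightarrow> fst (u z') \<le> 0"
    using uK unfolding Kh_space_def Vh_space_def by blast+
  have vK: "(\<lambda>x. u x + \<pi> x) \<in> Kh_space \<Omega> \<Gamma>D \<Gamma>C Tr"
    unfolding Kh_space_def Vh_space_def
  proof (intro CollectI conjI ballI)
    show "continuous_on (closure \<Omega>) (\<lambda>x. u x + \<pi> x)"
      unfolding \<pi>_def by (intro continuous_intros uV(1) psiz(1))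
    fix K assume K: "K \<in> Tr"
    have "P2_on (convex hull K) (\<lambda>x. fst (u x) + (c * fst (e i)) * \<psi> z x)"
      using uV(2)[OF K] psiz(2)[OF K] by (intro P2_on_add P2_on_scale) auto
    then show "P2_on (convex hull K) (\<lambda>x. fst (u x + \<pi> x))" by (simp add: \<pi>_def algebra_simps)
    have "P2_on (convex hull K) (\<lambda>x. snd (u x) + (c * snd (e i)) * \<psi> z x)"
      using uV(2)[OF K] psiz(2)[OF K] by (intro P2_on_add P2_on_scale) auto
    then show "P2_on (convex hull K) (\<lambda>x. snd (u x + \<pi> x))" by (simp add: \<pi>_def algebra_simps)
  next
    fix x assume "x \<in> \<Gamma>D" then show "u x + \<pi> x = 0" using uV(3) psiz(3) by (simp add: \<pi>_def)
  next
    fix z' assume z': "z' \<in> ?CN"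
    have "0 \<le> \<psi> z z'" using psiz(4)[of z'] z' CF by auto
    then have "c * \<psi> z z' * fst (e i) \<le> 0" using ci i by (auto simp: e_def mult_nonpos_nonneg)
    then show "fst (u z' + \<pi> z') \<le> 0" using uV(4)[OF z'] by (simp add: \<pi>_def)
  qed
  have "(\<lambda>x. (u x + \<pi> x) - u x) = \<pi>" by auto
  then have "a_form chi \<mu> \<Omega> u \<pi> \<ge> L_form \<Omega> Tr \<Gamma>N f g \<pi>" using VI vK by metis
  moreover have "disc_ip Tr \<Gamma>C \<phi> lam w = L_form \<Omega> Tr \<Gamma>N f g \<pi> - a_form chi \<mu> \<Omega> u \<pi>"
    using lamdef wQ pi by metis
  ultimately show ?thesis using disc by linarith
qed



theorem lemma4p1:
  fixes \<Omega> \<Gamma>D \<Gamma>N \<Gamma>C :: "pt set" and Tr :: "pt set set" and chi \<mu> :: real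
    and f g u lam :: "pt \<Rightarrow> pt" and \<psi> \<phi> :: "pt \<Rightarrow> pt \<Rightarrow> real"
  assumes setting: "contact_setting \<Omega> \<Gamma>D \<Gamma>N \<Gamma>C Tr"
    and lame: "chi > 0" "\<mu> > 0"
    and data: "L2_dom \<Omega> f" "L2_bd Tr \<Gamma>N g"
    and psi: "P2_basis \<Omega> \<Gamma>D Tr \<psi>"
    and phi: "Q1_basis Tr \<Gamma>C \<phi>"
    and uK: "u \<in> Kh_space \<Omega> \<Gamma>D \<Gamma>C Tr"
    and VI: "\<forall>v\<in>Kh_space \<Omega> \<Gamma>D \<Gamma>C Tr.
               a_form chi \<mu> \<Omega> u (\<lambda>x. v x - u x) \<ge> L_form \<Omega> Tr \<Gamma>N f g (\<lambda>x. v x - u x)"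
    and lamQ: "lam \<in> Qh_space Tr \<Gamma>C"
    and lamdef: "\<forall>w\<in>Qh_space Tr \<Gamma>C.
               disc_ip Tr \<Gamma>C \<phi> lam w
                 = L_form \<Omega> Tr \<Gamma>N f g (pi_h Tr \<Gamma>C \<psi> w) - a_form chi \<mu> \<Omega> u (pi_h Tr \<Gamma>C \<psi> w)"
  shows "\<forall>v :: pt \<Rightarrow> pt. (\<forall>x\<in>\<Gamma>D. v x = 0) \<longrightarrow>
           lam_tilde Tr \<Gamma>C \<phi> lam v = lam_tilde_i Tr \<Gamma>C \<phi> lam 1 (\<lambda>x. fst (v x)) \<and>
           ((\<forall>x\<in>closure \<Omega>. fst (v x) \<ge> 0) \<longrightarrow> lam_tilde_i Tr \<Gamma>C \<phi> lam 1 (\<lambda>x. fst (v x)) \<ge> 0)"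
proof (intro allI impI conjI)
  let ?CN = "contact_nodes Tr \<Gamma>C"
  have l2: "snd (lam z) = 0" if z: "z \<in> ?CN" for z
  proof -
    have B: "bint Tr \<Gamma>C (gammaC Tr \<Gamma>C z) (\<phi> z) > 0" using Bpos[OF setting phi z] .
    have "1 * comp 2 (lam z) * bint Tr \<Gamma>C (gammaC Tr \<Gamma>C z) (\<phi> z) \<le> 0"
      by (rule key[OF setting psi phi uK VI lamdef z]) auto
    moreover have "(-1) * comp 2 (lam z) * bint Tr \<Gamma>C (gammaC Tr \<Gamma>C z) (\<phi> z) \<le> 0"
      by (rule key[OF setting psi phi uK VI lamdef z]) auto
    ultimately have "comp 2 (lam z) * bint Tr \<Gamma>C (gammaC Tr \<Gamma>C z) (\<phi> z) = 0" by simp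
    then show ?thesis using B by (simp add: comp_def)
  qed
  have l1: "fst (lam z) \<ge> 0" if z: "z \<in> ?CN" for z
  proof -
    have B: "bint Tr \<Gamma>C (gammaC Tr \<Gamma>C z) (\<phi> z) > 0" using Bpos[OF setting phi z] .
    have "(-1) * comp 1 (lam z) * bint Tr \<Gamma>C (gammaC Tr \<Gamma>C z) (\<phi> z) \<le> 0"
      by (rule key[OF setting psi phi uK VI lamdef z]) auto
    then have "0 \<le> comp 1 (lam z) * bint Tr \<Gamma>C (gammaC Tr \<Gamma>C z) (\<phi> z)" by simp
    then show ?thesis using B by (simp add: comp_def zero_le_mult_iff)
  qed
  fix v :: "pt \<Rightarrow> pt"
  have "lam_tilde_i Tr \<Gamma>C \<phi> lam 2 (\<lambda>x. comp 2 (v x)) = 0"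
  proof -
    have "(\<Sum>z\<in>?CN. comp 2 (lam z) * \<phi> z x) = 0" for x
      using l2 by (intro sum.neutral) (auto simp: comp_def)
    then show ?thesis by (simp add: lam_tilde_i_def bint_def seg_integral_def)
  qed
  then show "lam_tilde Tr \<Gamma>C \<phi> lam v = lam_tilde_i Tr \<Gamma>C \<phi> lam 1 (\<lambda>x. fst (v x))"
    by (simp add: lam_tilde_def comp_def)
  assume vpos: "\<forall>x\<in>closure \<Omega>. fst (v x) \<ge> 0"
  have GC: "\<Gamma>C \<subseteq> closure \<Omega>" using setting_facts(1)[OF setting] frontier_def by auto
  show "lam_tilde_i Tr \<Gamma>C \<phi> lam 1 (\<lambda>x. fst (v x)) \<ge> 0"
    unfolding lam_tilde_i_def bint_def
  proof (intro mult_nonneg_nonneg sum_nonneg)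
    fix ab assume ab: "ab \<in> edges_on Tr \<Gamma>C"
    obtain a b where abe: "ab = (a,b)" by (cases ab)
    show "0 \<le> (case ab of (a, b) \<Rightarrow> seg_integral a b (\<lambda>x. indicator \<Gamma>C x * ((\<Sum>z\<in>?CN. comp 1 (lam z) * \<phi> z x) * fst (v x))))"
      unfolding abe prod.case
    proof (rule seg_int_nonneg)
      fix t :: real assume t: "t \<in> {0..1}"
      let ?x = "a + t *\<^sub>R (b - a)"
      have "0 \<le> (\<Sum>z\<in>?CN. comp 1 (lam z) * \<phi> z ?x)"
        using l1 phi_nonneg_edge[OF phi _ ab[unfolded abe]] t by (intro sum_nonneg mult_nonneg_nonneg) (auto simp: comp_def)
      moreover have "?x \<in> \<Gamma>C \<Longrightarrow> 0 \<le> fst (v ?x)" using vpos GC by blast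
      ultimately show "0 \<le> indicator \<Gamma>C ?x * ((\<Sum>z\<in>?CN. comp 1 (lam z) * \<phi> z ?x) * fst (v ?x))"
        by (auto simp: indicator_def)
    qed
  qed simp
qed

end
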